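(* Let $(a_n)_{n\ge1}$ be the sequence defined by $a_1=1$ and $a_n = a_{n-1}\left(1-\frac{a_{n-1}}{n}\right)$ for $n\ge 2$. Then $\frac{1}{a_n}\sim \log n$, i.e. $\lim_{n\to\infty} \frac{1/a_n}{\log n}=1$.
   Context: $\log$ denotes the natural logarithm. The sequence $(a_n)$ is defined by the recurrence $a_1=1$, $a_n=a_{n-1}(1-a_{n-1}/n)$ for $n\ge2$. *)

theory Defs
  imports "HOL-Analysis.Analysis"
begin

text \<open>The sequence a_n for n >= 1; the value at index 0 is an unused dummy (set to 0).\<close>
fun a :: "nat \<Rightarrow> real" where
  "a 0 = 0"
| "a (Suc 0) = 1"
| "a (Suc (Suc n)) = a (Suc n) * (1 - a (Suc n) / real (Suc (Suc n)))"

end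

theory Submission
  imports Defs "HOL-Real_Asymp.Real_Asymp"
begin

lemma a_bounds:
  "0 < a (Suc n) \<and> a (Suc n) \<le> 1 \<and> harm (Suc n) \<le> 1 / a (Suc n)
   \<and> 1 / a (Suc n) \<le> 1 + harm n"
proof (induction n)
  case 0
  then show ?case by (simp add: harm_def)
next
  case (Suc n)
  define x where "x = a (Suc n)"
  define N where "N = real (Suc (Suc n))"
  have x: "0 < x" "x \<le> 1" using Suc x_def by auto
  have N: "N \<ge> 2" unfolding N_def by simp
  have ih1: "harm (Suc n) \<le> 1 / x" and ih2: "1 / x \<le> 1 + harm n" using Suc x_def by auto
  have ad: "a (Suc (Suc n)) = x * (1 - x / N)" by (simp add: x_def N_def)
  have pos: "0 < x * (1 - x / N)" using x N by (simp add: field_simps)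
  have le1: "x * (1 - x / N) \<le> 1"
  proof -
    have "x * (1 - x / N) \<le> x * 1" using x N by (intro mult_left_mono) auto
    then show ?thesis using x by linarith
  qed
  have eq: "1 / (x * (1 - x / N)) = 1 / x + 1 / (N - x)"
    using x N by (simp add: field_simps)
  have l: "1 / N \<le> 1 / (N - x)" using x N by (simp add: frac_le)
  have u: "1 / (N - x) \<le> 1 / (N - 1)" using x N by (intro divide_left_mono) auto
  have hN: "harm (Suc (Suc n)) = harm (Suc n) + 1 / N"
    by (simp add: harm_Suc N_def divide_inverse)
  have hN1: "harm (Suc n) = harm n + 1 / (N - 1)"
    by (simp add: harm_Suc N_def divide_inverse)
  show ?case unfolding ad using pos le1 eq l u hN hN1 ih1 ih2 by auto
qed

lemma bounds:
  assumes "n \<ge> 2"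
  shows "ln (real n) \<le> 1 / a n \<and> 1 / a n \<le> 2 + ln (real n)"
proof -
  obtain m where m: "n = Suc m" "m \<ge> 1" using assms by (cases n) auto
  have b: "harm (Suc m) \<le> 1 / a (Suc m)" "1 / a (Suc m) \<le> 1 + harm m"
    using a_bounds[of m] by auto
  have h1: "ln (real (Suc m)) \<le> harm (Suc m)"
    using harm_ge_ln[of "Suc m"] by (smt (verit) ln_le_cancel_iff of_nat_0_less_iff zero_less_Suc)
  have h2: "harm m - ln (real m) \<le> harm 1 - ln (real (1::nat))"
    using euler_mascheroni_sequence_decreasing[of 1 m] m by simp
  have h3: "ln (real m) \<le> ln (real (Suc m))" using m by simp
  have h4: "harm (1::nat) = (1::real)" using harm_Suc[of 0] by (simp add: harm_def)
  show ?thesis unfolding m(1) using b h1 h2 h3 h4 by simp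
qed

theorem mainTheorem3:
  shows "(\<lambda>n. (1 / a n) / ln (real n)) \<longlonglongrightarrow> 1"
proof (rule tendsto_sandwich[of "\<lambda>n. 1" _ _ "\<lambda>n. 1 + 2 / ln (real n)"])
  show "\<forall>\<^sub>F n in sequentially. 1 \<le> 1 / a n / ln (real n)"
    using eventually_ge_at_top[of "3::nat"]
  proof eventually_elim
    case (elim n)
    have "ln (real n) > 0" using elim by simp
    then have "ln (real n) / ln (real n) \<le> 1 / a n / ln (real n)"
      using bounds[of n] elim by (intro divide_right_mono) auto
    then show ?case using \<open>ln (real n) > 0\<close> by simp
  qed
  show "\<forall>\<^sub>F n in sequentially. 1 / a n / ln (real n) \<le> 1 + 2 / ln (real n)"
    using eventually_ge_at_top[of "3::nat"]
  proof eventually_elim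
    case (elim n)
    have "ln (real n) > 0" using elim by simp
    then have "1 / a n / ln (real n) \<le> (2 + ln (real n)) / ln (real n)"
      using bounds[of n] elim by (intro divide_right_mono) auto
    also have "\<dots> = 1 + 2 / ln (real n)" using \<open>ln (real n) > 0\<close> by (simp add: field_simps)
    finally show ?case .
  qed
  show "(\<lambda>n. 1) \<longlonglongrightarrow> (1::real)" by simp
  show "(\<lambda>n. 1 + 2 / ln (real n)) \<longlonglongrightarrow> 1" by real_asymp
qed

end
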